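(* Let $H\subset\mathrm{Aut}(K^n)$ be the subgroup generated by $\mathcal{S}_n$ and $\{\sigma_{ij}\}_{1\le i<j\le n}$. For $1\le i<j\le n$ and $t\in H$, if $t$ has a fixed point on $\Delta_{K*\mu,ij}$, then $t=(i,j)$ (the transposition) or $t=\mathrm{id}_{K^n}$.
   Context: $n\ge2$. $\mu:K\to E$ is the universal covering of an Enriques surface $E$ by a K3 surface, $\sigma$ its (fixed-point-free) covering involution. $\mathcal{S}_n$ acts on $K^n$ by permuting factors; $\sigma_{ij}$ applies $\sigma$ to coordinates $i$ and $j$. $E^n_*\subset E^n$ is the set of $n$-tuples with at most two coordinates equal (i.e. at most one pair of equal coordinates and no three equal). $K^n_{*\mu}=(\mu^n)^{-1}(E^n_* )$ where $\mu^n(x_1,\dots,x_n)=(\mu(x_1),\dots,\mu(x_n))$, and $\Delta_{K*\mu,ij}=\{(x_l)\in K^n_{*\mu}:x_i=x_j\}$. *)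

theory Defs
  imports Main "HOL-Combinatorics.Transposition"
begin

text \<open>Abstract setting. The K3 surface K and Enriques surface E are modelled by
  types 'k and 'e; points of K^n are functions 'n \<Rightarrow> 'k, where the finite
  type 'n indexes the n factors.\<close>

definition perm_act :: "('n \<Rightarrow> 'n) \<Rightarrow> ('n \<Rightarrow> 'k) \<Rightarrow> ('n \<Rightarrow> 'k)" where
  "perm_act p x = x \<circ> inv p"

definition sigma_ij :: "('k \<Rightarrow> 'k) \<Rightarrow> 'n \<Rightarrow> 'n \<Rightarrow> ('n \<Rightarrow> 'k) \<Rightarrow> ('n \<Rightarrow> 'k)" where
  "sigma_ij \<sigma> i j x = x(i := \<sigma> (x i), j := \<sigma> (x j))"

text \<open>The subgroup H of Aut(K^n) generated by S_n and the sigma_ij.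
  (All generators have finite order, so the generated monoid is the generated group.)\<close>
inductive_set H_group :: "('k \<Rightarrow> 'k) \<Rightarrow> (('n \<Rightarrow> 'k) \<Rightarrow> ('n \<Rightarrow> 'k)) set"
  for \<sigma> :: "'k \<Rightarrow> 'k" where
  H_id: "id \<in> H_group \<sigma>"
| H_perm: "t \<in> H_group \<sigma> \<Longrightarrow> bij p \<Longrightarrow> perm_act p \<circ> t \<in> H_group \<sigma>"
| H_sigma: "t \<in> H_group \<sigma> \<Longrightarrow> i \<noteq> j \<Longrightarrow> sigma_ij \<sigma> i j \<circ> t \<in> H_group \<sigma>"

text \<open>E^n_*: at most one pair of equal coordinates and no three equal.\<close>
definition E_star :: "('n \<Rightarrow> 'e) set" where
  "E_star = {y. \<forall>a b c d. a \<noteq> b \<and> c \<noteq> d \<and> y a = y b \<and> y c = y d \<longrightarrow> {a, b} = {c, d}}"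

definition K_star_mu :: "('k \<Rightarrow> 'e) \<Rightarrow> ('n \<Rightarrow> 'k) set" where
  "K_star_mu \<mu> = {x. \<mu> \<circ> x \<in> E_star}"

definition Delta_K_star_mu :: "('k \<Rightarrow> 'e) \<Rightarrow> 'n \<Rightarrow> 'n \<Rightarrow> ('n \<Rightarrow> 'k) set" where
  "Delta_K_star_mu \<mu> i j = {x \<in> K_star_mu \<mu>. x i = x j}"

end

theory Submission
  imports Defs
begin

lemma H_rep:
  assumes invol: "\<And>x. \<sigma> (\<sigma> x) = x"
  shows "t \<in> H_group \<sigma> \<Longrightarrow> \<exists>q e. bij q \<and> (\<forall>x. t x = (\<lambda>k. if e k then \<sigma> (x (q k)) else x (q k)))"
proof (induction rule: H_group.induct)
  case H_id
  show ?case by (rule exI[of _ id], rule exI[of _ "\<lambda>_. False"]) (auto simp: id_def[symmetric])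
next
  case (H_perm t p)
  then obtain q e where q: "bij q" and e: "\<forall>x. t x = (\<lambda>k. if e k then \<sigma> (x (q k)) else x (q k))" by blast
  have "bij (q \<circ> inv p)" using q \<open>bij p\<close> by (simp add: bij_comp bij_imp_bij_inv)
  moreover have "\<forall>x. (perm_act p \<circ> t) x = (\<lambda>k. if (e \<circ> inv p) k then \<sigma> (x ((q \<circ> inv p) k)) else x ((q \<circ> inv p) k))"
    using e by (simp add: perm_act_def fun_eq_iff)
  ultimately show ?case by blast
next
  case (H_sigma t i j)
  then obtain q e where q: "bij q" and e: "\<forall>x. t x = (\<lambda>k. if e k then \<sigma> (x (q k)) else x (q k))" by blast
  have "\<forall>x. (sigma_ij \<sigma> i j \<circ> t) x = (\<lambda>k. if (e(i := \<not> e i, j := \<not> e j)) k then \<sigma> (x (q k)) else x (q k))"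
    using e invol by (simp add: sigma_ij_def fun_eq_iff)
  with q show ?case by blast
qed

theorem lemma2p3:
  fixes \<sigma> :: "'k \<Rightarrow> 'k" and \<mu> :: "'k \<Rightarrow> 'e"
    and i j :: "'n::finite" and t :: "('n \<Rightarrow> 'k) \<Rightarrow> ('n \<Rightarrow> 'k)"
  assumes n2: "card (UNIV :: 'n set) \<ge> 2"
    and invol: "\<And>x. \<sigma> (\<sigma> x) = x"
    and fpf: "\<And>x. \<sigma> x \<noteq> x"
    and cover: "\<And>x y. \<mu> x = \<mu> y \<longleftrightarrow> y = x \<or> y = \<sigma> x"
    and surj_mu: "surj \<mu>"
    and ij: "i \<noteq> j"
    and tH: "t \<in> H_group \<sigma>"
    and fixpt: "\<exists>x \<in> Delta_K_star_mu \<mu> i j. t x = x"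
  shows "t = perm_act (transpose i j) \<or> t = id"
proof -
  obtain q e where q: "bij q" and e: "\<forall>x. t x = (\<lambda>k. if e k then \<sigma> (x (q k)) else x (q k))"
    using H_rep[OF invol tH] by blast
  obtain x where xD: "x \<in> Delta_K_star_mu \<mu> i j" and tx: "t x = x" using fixpt by blast
  have xij: "x i = x j" and xE: "\<mu> \<circ> x \<in> E_star" using xD
    by (auto simp: Delta_K_star_mu_def K_star_mu_def)
  have fk: "(if e k then \<sigma> (x (q k)) else x (q k)) = x k" for k
    using tx e by (metis (no_types, lifting))
  have mu: "\<mu> (x (q k)) = \<mu> (x k)" for k
    using fk[of k] cover by (cases "e k") auto
  have qk: "q k \<noteq> k \<Longrightarrow> {q k, k} = {i, j}" for k
  proof -
    assume a: "q k \<noteq> k"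
    have "\<forall>a b c d. a \<noteq> b \<and> c \<noteq> d \<and> (\<mu> \<circ> x) a = (\<mu> \<circ> x) b \<and> (\<mu> \<circ> x) c = (\<mu> \<circ> x) d \<longrightarrow> {a, b} = {c, d}"
      using xE unfolding E_star_def by blast
    hence "q k \<noteq> k \<and> i \<noteq> j \<and> (\<mu> \<circ> x) (q k) = (\<mu> \<circ> x) k \<and> (\<mu> \<circ> x) i = (\<mu> \<circ> x) j \<longrightarrow> {q k, k} = {i, j}"
      by blast
    thus ?thesis using a ij mu[of k] xij by simp
  qed
  have inj: "inj q" using q bij_is_inj by blast
  have xq: "x (q k) = x k" for k
  proof (cases "q k = k")
    case False thus ?thesis using qk[OF False] xij by (auto simp: doubleton_eq_iff)
  qed simp
  have ne: "\<not> e k" for k using fk[of k] xq[of k] fpf by (cases "e k") auto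
  have tq: "t = (\<lambda>x. x \<circ> q)" using e ne by (auto simp: fun_eq_iff)
  show ?thesis
  proof (cases "q i = i")
    case True
    have "q k = k" for k
    proof (rule ccontr)
      assume a: "q k \<noteq> k"
      hence "{q k, k} = {i, j}" by (rule qk)
      hence "k = j \<and> q j = i \<or> k = i" using a by (auto simp: doubleton_eq_iff)
      thus False using True a inj ij by (metis injD)
    qed
    hence "t = id" using tq by (auto simp: fun_eq_iff)
    thus ?thesis by simp
  next
    case False
    hence qi: "q i = j" using qk[of i] by (auto simp: doubleton_eq_iff)
    have qj: "q j = i"
    proof -
      have "q j \<noteq> j" using qi ij inj by (metis injD)
      thus ?thesis using qk[of j] by (auto simp: doubleton_eq_iff)
    qed
    have "q k = transpose i j k" for k
    proof (cases "k = i \<or> k = j")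
      case True thus ?thesis using qi qj by auto
    next
      case F: False
      have "q k = k" using qk[of k] F by (auto simp: doubleton_eq_iff)
      thus ?thesis using F by (simp add: transpose_def)
    qed
    hence "t = perm_act (transpose i j)" using tq
      by (auto simp: perm_act_def fun_eq_iff)
    thus ?thesis by simp
  qed
qed

end
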